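(* For the Physarum solver of the transportation problem on $G$ with arbitrary positive initial diameters, if no two distinct equilibria have the same cost, then $D(t)$ converges to an equilibrium $D^*$, and $D^*=|F^*|$ for a minimum-cost feasible solution $F^*$ of the transportation problem.
   Context: Let $G=(N,E)$ be a finite connected undirected graph with edge lengths $L_e>0$ and supplies/demands $b_v\in\mathbb R$ with $\sum_vb_v=0$. A feasible solution of the (uncapacitated) transportation problem is a flow $F$ (value on each edge with a fixed reference orientation) whose net outflow at each vertex $v$ equals $b_v$; its cost is $\sum_eL_e|F_e|$. Physarum solver: each edge has a time-dependent diameter $D_e(t)$ with $D_e(0)>0$ and resistance $R_e=L_e/D_e$; at each time the current $Q$ is the feasible solution satisfying Ohm's law $Q_e=D_e(p_u-p_v)/L_e$ for $e=(u,v)$ for some vertex potentials $p$ (i.e. $\sum_{u\in\delta(v)}(p_v-p_u)/R_{uv}=b_v$ for all $v$); the dynamics are $\dot D_e=|Q_e|-D_e$. $D\in\mathbb R^E_{\ge0}$ is an equilibrium point if $D_e=|Q_e|$ for all $e$ (edges with $D_e=0$ treated as absent); the cost of an equilibrium $D$ is $\sum_eL_eD_e$. *)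

theory Defs
  imports "HOL-Analysis.Analysis"
begin

text \<open>A finite undirected (multi)graph with vertex set N and edge set E; every edge
  e has a fixed reference orientation from src e to tgt e.\<close>

definition graph_connected :: "'v set \<Rightarrow> 'e set \<Rightarrow> ('e \<Rightarrow> 'v) \<Rightarrow> ('e \<Rightarrow> 'v) \<Rightarrow> bool" where
  "graph_connected N E src tgt \<longleftrightarrow>
     (let A = {(src e, tgt e) | e. e \<in> E} \<union> {(tgt e, src e) | e. e \<in> E}
      in \<forall>u\<in>N. \<forall>v\<in>N. (u, v) \<in> A\<^sup>*)"

definition net_outflow :: "'e set \<Rightarrow> ('e \<Rightarrow> 'v) \<Rightarrow> ('e \<Rightarrow> 'v) \<Rightarrow> ('e \<Rightarrow> real) \<Rightarrow> 'v \<Rightarrow> real" where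
  "net_outflow E src tgt F v = (\<Sum>e\<in>{e\<in>E. src e = v}. F e) - (\<Sum>e\<in>{e\<in>E. tgt e = v}. F e)"

definition feasible_flow :: "'v set \<Rightarrow> 'e set \<Rightarrow> ('e \<Rightarrow> 'v) \<Rightarrow> ('e \<Rightarrow> 'v) \<Rightarrow> ('v \<Rightarrow> real) \<Rightarrow> ('e \<Rightarrow> real) \<Rightarrow> bool" where
  "feasible_flow N E src tgt b F \<longleftrightarrow> (\<forall>v\<in>N. net_outflow E src tgt F v = b v)"

definition flow_cost :: "'e set \<Rightarrow> ('e \<Rightarrow> real) \<Rightarrow> ('e \<Rightarrow> real) \<Rightarrow> real" where
  "flow_cost E L F = (\<Sum>e\<in>E. L e * \<bar>F e\<bar>)"

definition is_current :: "'v set \<Rightarrow> 'e set \<Rightarrow> ('e \<Rightarrow> 'v) \<Rightarrow> ('e \<Rightarrow> 'v) \<Rightarrow> ('v \<Rightarrow> real) \<Rightarrow> ('e \<Rightarrow> real)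
    \<Rightarrow> ('e \<Rightarrow> real) \<Rightarrow> ('e \<Rightarrow> real) \<Rightarrow> bool" where
  "is_current N E src tgt b L D Q \<longleftrightarrow> feasible_flow N E src tgt b Q \<and>
     (\<exists>p :: 'v \<Rightarrow> real. \<forall>e\<in>E. Q e = D e * (p (src e) - p (tgt e)) / L e)"

text \<open>Equilibrium point: nonnegative diameters with D_e = |Q_e| for the current Q of D
  (edges with D_e = 0 carry no current by Ohm's law, i.e. are treated as absent).\<close>
definition equilibrium :: "'v set \<Rightarrow> 'e set \<Rightarrow> ('e \<Rightarrow> 'v) \<Rightarrow> ('e \<Rightarrow> 'v) \<Rightarrow> ('v \<Rightarrow> real) \<Rightarrow> ('e \<Rightarrow> real)
    \<Rightarrow> ('e \<Rightarrow> real) \<Rightarrow> bool" where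
  "equilibrium N E src tgt b L D \<longleftrightarrow> (\<forall>e\<in>E. D e \<ge> 0) \<and>
     (\<exists>Q. is_current N E src tgt b L D Q \<and> (\<forall>e\<in>E. D e = \<bar>Q e\<bar>))"

definition equilibrium_cost :: "'e set \<Rightarrow> ('e \<Rightarrow> real) \<Rightarrow> ('e \<Rightarrow> real) \<Rightarrow> real" where
  "equilibrium_cost E L D = (\<Sum>e\<in>E. L e * D e)"

definition physarum_solution :: "'v set \<Rightarrow> 'e set \<Rightarrow> ('e \<Rightarrow> 'v) \<Rightarrow> ('e \<Rightarrow> 'v) \<Rightarrow> ('v \<Rightarrow> real) \<Rightarrow> ('e \<Rightarrow> real)
    \<Rightarrow> (real \<Rightarrow> 'e \<Rightarrow> real) \<Rightarrow> bool" where
  "physarum_solution N E src tgt b L D \<longleftrightarrow> (\<forall>e\<in>E. D 0 e > 0) \<and>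
     (\<forall>t\<ge>0. \<exists>Q. is_current N E src tgt b L (D t) Q \<and>
        (\<forall>e\<in>E. ((\<lambda>s. D s e) has_real_derivative (\<bar>Q e\<bar> - D t e)) (at t within {0..})))"

end

theory Submission
  imports Defs
begin


lemma sum_by_parts:
  assumes "finite E" "finite N" "\<forall>e\<in>E. src e \<in> N \<and> tgt e \<in> N"
  shows "(\<Sum>e\<in>E. F e * (p (src e) - p (tgt e))) = (\<Sum>v\<in>N. p v * net_outflow E src tgt F v)"
proof -
  have a: "(\<Sum>v\<in>N. p v * (\<Sum>e\<in>{e\<in>E. g e = v}. F e)) = (\<Sum>e\<in>E. F e * p (g e))"
    if g: "\<forall>e\<in>E. g e \<in> N" for g :: "'a \<Rightarrow> 'b"
  proof -
    have "(\<Sum>v\<in>N. p v * (\<Sum>e\<in>{e\<in>E. g e = v}. F e)) = (\<Sum>v\<in>N. \<Sum>e\<in>E. if g e = v then p v * F e else 0)"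
      by (simp add: sum_distrib_left sum.inter_filter[OF assms(1)] if_distrib cong: if_cong)
    also have "\<dots> = (\<Sum>e\<in>E. \<Sum>v\<in>N. if g e = v then p v * F e else 0)" by (rule sum.swap)
    also have "\<dots> = (\<Sum>e\<in>E. F e * p (g e))"
      using g assms(2) by (intro sum.cong refl) (simp add: sum.delta' mult.commute)
    finally show ?thesis .
  qed
  have s: "\<forall>e\<in>E. src e \<in> N" and t: "\<forall>e\<in>E. tgt e \<in> N" using assms(3) by auto
  show ?thesis
    unfolding net_outflow_def right_diff_distrib sum_subtractf a[OF s] a[OF t]
    by (simp add: sum_subtractf right_diff_distrib)
qed

lemma mono_deriv:
  assumes "a \<le> s" "\<And>t. t\<in>{a..s} \<Longrightarrow> (f has_real_derivative f' t) (at t within {a..s})"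
    "\<And>t. t\<in>{a..s} \<Longrightarrow> f' t \<ge> 0"
  shows "f a \<le> f s"
proof -
  have "(f' has_integral f s - f a) {a..s}"
    using assms(1,2) by (intro fundamental_theorem_of_calculus)
      (auto simp: has_real_derivative_iff_has_vector_derivative[symmetric])
  from has_integral_nonneg[OF this] assms(3) show ?thesis by auto
qed

lemma path_bound:
  assumes "(u, w) \<in> R ^^ k" "\<forall>(x,y)\<in>R. \<bar>p x - p y\<bar> \<le> (B::real)"
  shows "\<bar>p u - p w\<bar> \<le> real k * B"
  using assms(1)
proof (induction k arbitrary: w)
  case 0 then show ?case by simp
next
  case (Suc k)
  then obtain y where "(u,y) \<in> R ^^ k" "(y,w) \<in> R" by auto
  with Suc.IH have "\<bar>p u - p y\<bar> \<le> real k * B" by blast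
  moreover have "\<bar>p y - p w\<bar> \<le> B" using assms(2) \<open>(y,w)\<in>R\<close> by auto
  ultimately show ?case by (simp add: algebra_simps)
qed

lemma bw_finite:
  fixes f :: "nat \<Rightarrow> 'a \<Rightarrow> real"
  assumes "finite A" "\<And>n x. x\<in>A \<Longrightarrow> \<bar>f n x\<bar> \<le> B"
  shows "\<exists>r g. strict_mono r \<and> (\<forall>x\<in>A. (\<lambda>n. f (r n) x) \<longlonglongrightarrow> g x)"
  using assms
proof (induction A rule: finite_induct)
  case empty
  show ?case by (rule exI[of _ id]) (auto simp: strict_mono_def)
next
  case (insert a A)
  then obtain r g where r: "strict_mono r" "\<forall>x\<in>A. (\<lambda>n. f (r n) x) \<longlonglongrightarrow> g x" by auto
  have "bounded (range (\<lambda>n. f (r n) a))"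
    using insert.prems by (intro boundedI[of _ B]) auto
  then obtain l r2 where r2: "strict_mono r2" "((\<lambda>n. f (r n) a) \<circ> r2) \<longlonglongrightarrow> l"
    using bounded_imp_convergent_subsequence by blast
  show ?case
  proof (intro exI conjI)
    show "strict_mono (r \<circ> r2)" using r(1) r2(1) by (rule strict_mono_o)
    show "\<forall>x\<in>insert a A. (\<lambda>n. f ((r \<circ> r2) n) x) \<longlonglongrightarrow> (g(a:=l)) x"
    proof
      fix x assume "x \<in> insert a A"
      then show "(\<lambda>n. f ((r \<circ> r2) n) x) \<longlonglongrightarrow> (g(a:=l)) x"
      proof
        assume "x = a" then show ?thesis using r2(2) by (simp add: o_def)
      next
        assume x: "x \<in> A"
        with insert.hyps have "x \<noteq> a" by auto
        from LIMSEQ_subseq_LIMSEQ[OF r(2)[rule_format, OF x] r2(1)] \<open>x\<noteq>a\<close>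
        show ?thesis by (simp add: o_def)
      qed
    qed
  qed
qed

lemma bw_finite_ev:
  fixes f :: "nat \<Rightarrow> 'a \<Rightarrow> real"
  assumes "finite A" "eventually (\<lambda>n. \<forall>x\<in>A. \<bar>f n x\<bar> \<le> B) sequentially"
  shows "\<exists>r g. strict_mono r \<and> (\<forall>x\<in>A. (\<lambda>n. f (r n) x) \<longlonglongrightarrow> g x)"
proof -
  obtain n0 where n0: "\<And>n. n \<ge> n0 \<Longrightarrow> \<forall>x\<in>A. \<bar>f n x\<bar> \<le> B"
    using assms(2) unfolding eventually_sequentially by auto
  obtain r g where r: "strict_mono r" "\<forall>x\<in>A. (\<lambda>n. f (r n + n0) x) \<longlonglongrightarrow> g x"
    using bw_finite[OF assms(1), of "\<lambda>n. f (n + n0)" B] n0 by auto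
  show ?thesis
    by (rule exI[of _ "\<lambda>n. r n + n0"], rule exI[of _ g]) (use r in \<open>auto simp: strict_mono_def\<close>)
qed




lemma orth:
  assumes "finite E" "finite N" "\<forall>e\<in>E. src e \<in> N \<and> tgt e \<in> N"
    "feasible_flow N E src tgt b F" "feasible_flow N E src tgt b G"
  shows "(\<Sum>e\<in>E. (F e - G e) * (p (src e) - p (tgt e))) = 0"
proof -
  have "(\<Sum>e\<in>E. (F e - G e) * (p (src e) - p (tgt e))) =
      (\<Sum>e\<in>E. F e * (p (src e) - p (tgt e))) - (\<Sum>e\<in>E. G e * (p (src e) - p (tgt e)))"
    by (simp add: left_diff_distrib sum_subtractf)
  also have "\<dots> = (\<Sum>v\<in>N. p v * b v) - (\<Sum>v\<in>N. p v * b v)"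
    using assms unfolding sum_by_parts[OF assms(1-3)] feasible_flow_def by simp
  finally show ?thesis by simp
qed

locale phys =
  fixes N :: "'v set" and E :: "'e set" and src tgt :: "'e \<Rightarrow> 'v"
    and L :: "'e \<Rightarrow> real" and b :: "'v \<Rightarrow> real" and D :: "real \<Rightarrow> 'e \<Rightarrow> real"
  assumes finN: "finite N" and finE: "finite E" and endp: "\<forall>e\<in>E. src e \<in> N \<and> tgt e \<in> N"
    and Lpos: "\<forall>e\<in>E. L e > 0" and sol: "physarum_solution N E src tgt b L D"
begin

definition cur :: "real \<Rightarrow> 'e \<Rightarrow> real" where
  "cur t = (SOME Q. is_current N E src tgt b L (D t) Q \<and>
     (\<forall>e\<in>E. ((\<lambda>s. D s e) has_real_derivative (\<bar>Q e\<bar> - D t e)) (at t within {0..})))"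

lemma cur: assumes "t \<ge> 0"
  shows "is_current N E src tgt b L (D t) (cur t) \<and>
     (\<forall>e\<in>E. ((\<lambda>s. D s e) has_real_derivative (\<bar>cur t e\<bar> - D t e)) (at t within {0..}))"
proof -
  obtain Q where "is_current N E src tgt b L (D t) Q \<and>
     (\<forall>e\<in>E. ((\<lambda>s. D s e) has_real_derivative (\<bar>Q e\<bar> - D t e)) (at t within {0..}))"
    using sol assms unfolding physarum_solution_def by blast
  then show ?thesis unfolding cur_def
    by (rule someI[where P="\<lambda>Q. is_current N E src tgt b L (D t) Q \<and>
     (\<forall>e\<in>E. ((\<lambda>s. D s e) has_real_derivative (\<bar>Q e\<bar> - D t e)) (at t within {0..}))"])
qed

definition pot :: "real \<Rightarrow> 'v \<Rightarrow> real" where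
  "pot t = (SOME p. \<forall>e\<in>E. cur t e = D t e * (p (src e) - p (tgt e)) / L e)"

lemma pot: "t \<ge> 0 \<Longrightarrow> e \<in> E \<Longrightarrow> cur t e = D t e * (pot t (src e) - pot t (tgt e)) / L e"
proof -
  assume t: "t \<ge> 0" and e: "e \<in> E"
  obtain p where "\<forall>e\<in>E. cur t e = D t e * (p (src e) - p (tgt e)) / L e"
    using cur[OF t] unfolding is_current_def by blast
  then have "\<forall>e\<in>E. cur t e = D t e * (pot t (src e) - pot t (tgt e)) / L e"
    unfolding pot_def by (rule someI[where P="\<lambda>p. \<forall>e\<in>E. cur t e = D t e * (p (src e) - p (tgt e)) / L e"])
  then show ?thesis using e by blast
qed

lemma feas: "t \<ge> 0 \<Longrightarrow> feasible_flow N E src tgt b (cur t)"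
  using cur[of t] unfolding is_current_def by auto

lemma Dderiv: "t \<ge> 0 \<Longrightarrow> e \<in> E \<Longrightarrow>
   ((\<lambda>s. D s e) has_real_derivative (\<bar>cur t e\<bar> - D t e)) (at t within {0..})"
  using cur[of t] by auto

lemma Dderiv': "t \<in> {a..c} \<Longrightarrow> a \<ge> 0 \<Longrightarrow> e \<in> E \<Longrightarrow>
   ((\<lambda>s. D s e) has_real_derivative (\<bar>cur t e\<bar> - D t e)) (at t within {a..c})"
  by (rule has_field_derivative_subset[OF Dderiv]) auto

lemma Dcont: "e \<in> E \<Longrightarrow> continuous_on {0..} (\<lambda>s. D s e)"
  unfolding continuous_on_eq_continuous_within using Dderiv DERIV_continuous by blast

lemma Dtends: "e \<in> E \<Longrightarrow> t \<ge> 0 \<Longrightarrow> ((\<lambda>s. D s e) \<longlongrightarrow> D t e) (at t within {0..})"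
  using Dcont unfolding continuous_on_def by auto

lemma Dpos: assumes "t \<ge> 0" "e \<in> E" shows "D t e > 0"
proof -
  have "D 0 e * exp 0 \<le> D t e * exp t"
  proof (rule mono_deriv[where f = "\<lambda>s. D s e * exp s"])
    fix s assume s: "s \<in> {0..t}"
    show "((\<lambda>s. D s e * exp s) has_real_derivative
        ((\<bar>cur s e\<bar> - D s e) * exp s + exp s * D s e)) (at s within {0..t})"
      by (rule DERIV_mult[OF Dderiv'[OF s _ assms(2)]]) (auto intro!: derivative_eq_intros)
    show "0 \<le> (\<bar>cur s e\<bar> - D s e) * exp s + exp s * D s e"
      by (simp add: algebra_simps)
  qed (use assms in auto)
  moreover have "D 0 e > 0" using sol assms unfolding physarum_solution_def by auto
  ultimately have "D t e * exp t > 0" by simp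
  then show ?thesis by (simp add: zero_less_mult_iff)
qed

lemma grad: "t \<ge> 0 \<Longrightarrow> e \<in> E \<Longrightarrow> pot t (src e) - pot t (tgt e) = L e * cur t e / D t e"
  using pot[of t e] Dpos[of t e] Lpos by (auto simp: field_simps)

definition Ef :: "real \<Rightarrow> real" where "Ef t = (\<Sum>e\<in>E. L e * (cur t e)\<^sup>2 / D t e)"
definition Cf :: "real \<Rightarrow> real" where "Cf t = (\<Sum>e\<in>E. L e * D t e)"
definition U :: "real \<Rightarrow> real \<Rightarrow> real" where "U t s = (\<Sum>e\<in>E. L e * (cur t e)\<^sup>2 / D s e)"

lemma thomson:
  assumes "t \<ge> 0" "feasible_flow N E src tgt b F"
  shows "(\<Sum>e\<in>E. L e * (F e)\<^sup>2 / D t e) = Ef t + (\<Sum>e\<in>E. L e * (F e - cur t e)\<^sup>2 / D t e)"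
proof -
  have o: "(\<Sum>e\<in>E. (F e - cur t e) * (pot t (src e) - pot t (tgt e))) = 0"
    by (rule orth[OF finE finN endp assms(2) feas[OF assms(1)]])
  have "(\<Sum>e\<in>E. L e * (F e)\<^sup>2 / D t e) = (\<Sum>e\<in>E. L e * (cur t e)\<^sup>2 / D t e + L e * (F e - cur t e)\<^sup>2 / D t e
      + 2 * ((F e - cur t e) * (pot t (src e) - pot t (tgt e))))"
  proof (rule sum.cong[OF refl])
    fix e assume e: "e \<in> E"
    have "D t e > 0" using Dpos[OF assms(1) e] .
    then show "L e * (F e)\<^sup>2 / D t e = L e * (cur t e)\<^sup>2 / D t e + L e * (F e - cur t e)\<^sup>2 / D t e
      + 2 * ((F e - cur t e) * (pot t (src e) - pot t (tgt e)))"
      unfolding grad[OF assms(1) e] by (simp add: field_simps power2_eq_square)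
  qed
  also have "\<dots> = Ef t + (\<Sum>e\<in>E. L e * (F e - cur t e)\<^sup>2 / D t e)"
    unfolding sum.distrib Ef_def sum_distrib_left[symmetric] o by simp
  finally show ?thesis .
qed

lemma Ef_term_nonneg: "t \<ge> 0 \<Longrightarrow> e \<in> E \<Longrightarrow> L e * X\<^sup>2 / D t e \<ge> 0"
  using Dpos[of t e] Lpos by auto

lemma Ef_nonneg: "t \<ge> 0 \<Longrightarrow> Ef t \<ge> 0"
  unfolding Ef_def by (intro sum_nonneg Ef_term_nonneg)

lemma thomson_le:
  assumes "t \<ge> 0" "feasible_flow N E src tgt b F"
  shows "Ef t \<le> (\<Sum>e\<in>E. L e * (F e)\<^sup>2 / D t e)"
  unfolding thomson[OF assms] using sum_nonneg[of E "\<lambda>e. L e * (F e - cur t e)\<^sup>2 / D t e"]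
    Ef_term_nonneg[OF assms(1)] by auto

lemma cur_sq_le: assumes "t \<ge> 0" "e \<in> E" shows "L e * (cur t e)\<^sup>2 \<le> D t e * Ef t"
proof -
  have "L e * (cur t e)\<^sup>2 / D t e \<le> Ef t"
    unfolding Ef_def by (rule member_le_sum[OF assms(2) _ finE]) (rule Ef_term_nonneg[OF assms(1)], auto)
  then show ?thesis using Dpos[OF assms] by (simp add: field_simps)
qed

end


context phys begin

lemma ev_nonneg: "eventually (\<lambda>s. s \<ge> 0) (at t within {0..})"
  unfolding eventually_at_filter by (rule always_eventually) simp

lemma inv_tends: "e \<in> E \<Longrightarrow> t \<ge> 0 \<Longrightarrow> ((\<lambda>s. 1 / D s e) \<longlongrightarrow> 1 / D t e) (at t within {0..})"
  by (rule tendsto_divide[OF tendsto_const Dtends]) (auto dest: Dpos)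

lemma U_tends: assumes "t \<ge> 0" shows "((\<lambda>s. U t s) \<longlongrightarrow> Ef t) (at t within {0..})"
proof -
  have "((\<lambda>s. \<Sum>e\<in>E. L e * (cur t e)\<^sup>2 * (1 / D s e)) \<longlongrightarrow> (\<Sum>e\<in>E. L e * (cur t e)\<^sup>2 * (1 / D t e))) (at t within {0..})"
    by (intro tendsto_sum tendsto_mult tendsto_const inv_tends assms)
  then show ?thesis unfolding U_def Ef_def by simp
qed

lemma cur_tends: assumes t: "t \<ge> 0" and e: "e \<in> E"
  shows "((\<lambda>s. cur s e) \<longlongrightarrow> cur t e) (at t within {0..})"
proof -
  define F where "F = at t within {0::real..}"
  define a where "a s = (\<Sum>e\<in>E. L e * (cur s e - cur t e)\<^sup>2 / D t e)" for s
  define bnd where "bnd s = U t s - Ef t + (\<Sum>e\<in>E. D s e * U t s * \<bar>1 / D t e - 1 / D s e\<bar>)" for s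
  have "(bnd \<longlongrightarrow> Ef t - Ef t + (\<Sum>e\<in>E. D t e * Ef t * \<bar>1 / D t e - 1 / D t e\<bar>)) F"
    unfolding bnd_def F_def
    by (intro tendsto_intros U_tends t Dtends inv_tends) auto
  then have bnd0: "(bnd \<longlongrightarrow> 0) F" by simp
  have le: "eventually (\<lambda>s. a s \<le> bnd s) F"
    using ev_nonneg unfolding F_def
  proof eventually_elim
    case (elim s)
    have th: "(\<Sum>e\<in>E. L e * (cur s e)\<^sup>2 / D t e) = Ef t + a s"
      unfolding a_def by (rule thomson[OF t feas[OF elim]])
    have sp: "(\<Sum>e\<in>E. L e * (cur s e)\<^sup>2 / D t e) = Ef s + (\<Sum>e\<in>E. L e * (cur s e)\<^sup>2 * (1 / D t e - 1 / D s e))"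
      unfolding Ef_def sum.distrib[symmetric] by (intro sum.cong refl) (simp add: field_simps)
    have Es: "Ef s \<le> U t s" unfolding U_def by (rule thomson_le[OF elim feas[OF t]])
    have "(\<Sum>e\<in>E. L e * (cur s e)\<^sup>2 * (1 / D t e - 1 / D s e)) \<le> (\<Sum>e\<in>E. D s e * U t s * \<bar>1 / D t e - 1 / D s e\<bar>)"
    proof (rule sum_mono)
      fix e assume e: "e \<in> E"
      have "L e * (cur s e)\<^sup>2 * (1 / D t e - 1 / D s e) \<le> L e * (cur s e)\<^sup>2 * \<bar>1 / D t e - 1 / D s e\<bar>"
        using Lpos e by (intro mult_left_mono) auto
      also have "\<dots> \<le> D s e * U t s * \<bar>1 / D t e - 1 / D s e\<bar>"
      proof (rule mult_right_mono)
        have "L e * (cur s e)\<^sup>2 \<le> D s e * Ef s" by (rule cur_sq_le[OF elim e])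
        also have "\<dots> \<le> D s e * U t s" using Es Dpos[OF elim e] by (intro mult_left_mono) auto
        finally show "L e * (cur s e)\<^sup>2 \<le> D s e * U t s" .
      qed auto
      finally show "L e * (cur s e)\<^sup>2 * (1 / D t e - 1 / D s e) \<le> D s e * U t s * \<bar>1 / D t e - 1 / D s e\<bar>" .
    qed
    then show ?case unfolding bnd_def using th sp Es by linarith
  qed
  have a0: "eventually (\<lambda>s. 0 \<le> a s) F"
    unfolding a_def by (intro always_eventually allI sum_nonneg Ef_term_nonneg[OF t])
  have "(a \<longlongrightarrow> 0) F" by (rule tendsto_sandwich[OF a0 le tendsto_const bnd0])
  then have g0: "((\<lambda>s. sqrt (D t e * a s / L e)) \<longlongrightarrow> 0) F"
    using tendsto_real_sqrt[OF tendsto_divide[OF tendsto_mult[OF tendsto_const, of a 0 F "D t e"] tendsto_const, of "L e"]]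
      Lpos e by fastforce
  have "eventually (\<lambda>s. norm (cur s e - cur t e) \<le> sqrt (D t e * a s / L e)) F"
  proof (rule always_eventually, rule allI)
    fix s
    have "L e * (cur s e - cur t e)\<^sup>2 / D t e \<le> a s"
      unfolding a_def by (rule member_le_sum[OF e _ finE]) (rule Ef_term_nonneg[OF t], auto)
    then have "(cur s e - cur t e)\<^sup>2 \<le> D t e * a s / L e"
      using Dpos[OF t e] Lpos e by (simp add: field_simps)
    then show "norm (cur s e - cur t e) \<le> sqrt (D t e * a s / L e)"
      by (simp add: real_le_rsqrt)
  qed
  from Lim_null_comparison[OF this g0] show ?thesis unfolding F_def by (rule LIM_zero_cancel)
qed

lemma Ef_tends: "t \<ge> 0 \<Longrightarrow> (Ef \<longlongrightarrow> Ef t) (at t within {0..})"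
  unfolding Ef_def[abs_def]
  by (intro tendsto_intros cur_tends Dtends) (auto dest: Dpos simp: less_imp_neq[symmetric])

end


context phys begin

definition kd :: "real \<Rightarrow> 'e \<Rightarrow> real" where
  "kd t e = - ((\<bar>cur t e\<bar> - D t e) * inverse (D t e ^ Suc (Suc 0)))"
definition Ed :: "real \<Rightarrow> real" where "Ed t = (\<Sum>e\<in>E. L e * (cur t e)\<^sup>2 * kd t e)"

lemma inv_quot: assumes "t \<ge> 0" "e \<in> E"
  shows "((\<lambda>s. (inverse (D s e) - inverse (D t e)) / (s - t)) \<longlongrightarrow> kd t e) (at t within {0..})"
proof -
  have "((\<lambda>s. inverse (D s e)) has_field_derivative kd t e) (at t within {0..})"
    unfolding kd_def by (rule DERIV_inverse_fun[OF Dderiv[OF assms]]) (use Dpos[OF assms] in auto)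
  then show ?thesis by (simp add: has_field_derivative_iff)
qed

lemma Ef_deriv: assumes t: "t \<ge> 0" shows "(Ef has_real_derivative Ed t) (at t within {0..})"
proof -
  define F where "F = at t within {0::real..}"
  define h where "h s e = (inverse (D s e) - inverse (D t e)) / (s - t)" for s e
  define A where "A s = (\<Sum>e\<in>E. L e * (cur t e)\<^sup>2 * h s e)" for s
  define B where "B s = (\<Sum>e\<in>E. L e * (cur s e)\<^sup>2 * h s e)" for s
  have hk: "e \<in> E \<Longrightarrow> ((\<lambda>s. h s e) \<longlongrightarrow> kd t e) F" for e
    unfolding h_def F_def by (rule inv_quot[OF t])
  have At: "(A \<longlongrightarrow> Ed t) F" unfolding A_def Ed_def[abs_def]
    by (intro tendsto_intros hk)
  have Bt: "(B \<longlongrightarrow> Ed t) F" unfolding B_def Ed_def[abs_def] F_def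
    by (intro tendsto_intros hk[unfolded F_def] cur_tends t)
  have ev: "eventually (\<lambda>s. s \<ge> 0 \<and> s \<noteq> t) F"
    unfolding F_def eventually_at_filter by (rule always_eventually) simp
  have "eventually (\<lambda>s. norm ((Ef s - Ef t) / (s - t) - Ed t) \<le> \<bar>A s - Ed t\<bar> + \<bar>B s - Ed t\<bar>) F"
    using ev
  proof eventually_elim
    case (elim s)
    then have s: "s \<ge> 0" "s \<noteq> t" by auto
    have up: "Ef s - Ef t \<le> (s - t) * A s"
    proof -
      have "Ef s \<le> U t s" unfolding U_def by (rule thomson_le[OF s(1) feas[OF t]])
      moreover have "U t s - Ef t = (s - t) * A s"
      proof -
        have "U t s - Ef t = (\<Sum>e\<in>E. L e * (cur t e)\<^sup>2 / D s e - L e * (cur t e)\<^sup>2 / D t e)"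
          by (simp add: U_def Ef_def sum_subtractf)
        also have "\<dots> = (\<Sum>e\<in>E. (s - t) * (L e * (cur t e)\<^sup>2 * h s e))"
        proof (rule sum.cong[OF refl])
          fix e assume e: "e \<in> E"
          have "D s e > 0" "D t e > 0" using Dpos[OF s(1) e] Dpos[OF t e] by auto
          then show "L e * (cur t e)\<^sup>2 / D s e - L e * (cur t e)\<^sup>2 / D t e = (s - t) * (L e * (cur t e)\<^sup>2 * h s e)"
            using s unfolding h_def by (simp add: field_simps)
        qed
        also have "\<dots> = (s - t) * A s" by (simp add: A_def sum_distrib_left)
        finally show ?thesis .
      qed
      ultimately show ?thesis by linarith
    qed
    have lo: "(s - t) * B s \<le> Ef s - Ef t"
    proof -
      have "Ef t \<le> (\<Sum>e\<in>E. L e * (cur s e)\<^sup>2 / D t e)" by (rule thomson_le[OF t feas[OF s(1)]])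
      moreover have "Ef s - (\<Sum>e\<in>E. L e * (cur s e)\<^sup>2 / D t e) = (s - t) * B s"
      proof -
        have "Ef s - (\<Sum>e\<in>E. L e * (cur s e)\<^sup>2 / D t e) = (\<Sum>e\<in>E. L e * (cur s e)\<^sup>2 / D s e - L e * (cur s e)\<^sup>2 / D t e)"
          by (simp add: Ef_def sum_subtractf)
        also have "\<dots> = (\<Sum>e\<in>E. (s - t) * (L e * (cur s e)\<^sup>2 * h s e))"
        proof (rule sum.cong[OF refl])
          fix e assume e: "e \<in> E"
          have "D s e > 0" "D t e > 0" using Dpos[OF s(1) e] Dpos[OF t e] by auto
          then show "L e * (cur s e)\<^sup>2 / D s e - L e * (cur s e)\<^sup>2 / D t e = (s - t) * (L e * (cur s e)\<^sup>2 * h s e)"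
            using s unfolding h_def by (simp add: field_simps)
        qed
        also have "\<dots> = (s - t) * B s" by (simp add: B_def sum_distrib_left)
        finally show ?thesis .
      qed
      ultimately show ?thesis by linarith
    qed
    show ?case
    proof (cases "s > t")
      case True
      then have "B s \<le> (Ef s - Ef t) / (s - t)" "(Ef s - Ef t) / (s - t) \<le> A s"
        using up lo by (simp_all add: field_simps mult.commute)
      then show ?thesis by auto
    next
      case False
      with s have st: "s < t" by auto
      then have "A s \<le> (Ef s - Ef t) / (s - t)" "(Ef s - Ef t) / (s - t) \<le> B s"
        using up lo by (simp_all add: field_simps mult.commute)
      then show ?thesis by auto
    qed
  qed
  moreover have "((\<lambda>s. \<bar>A s - Ed t\<bar> + \<bar>B s - Ed t\<bar>) \<longlongrightarrow> 0) F"
    using tendsto_add[OF tendsto_rabs[OF tendsto_diff[OF At tendsto_const[of "Ed t"]]] tendsto_rabs[OF tendsto_diff[OF Bt tendsto_const[of "Ed t"]]]]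
    by simp
  ultimately have "((\<lambda>s. (Ef s - Ef t) / (s - t) - Ed t) \<longlongrightarrow> 0) F"
    by (rule Lim_null_comparison)
  then show ?thesis unfolding has_field_derivative_iff F_def by (rule LIM_zero_cancel)
qed

definition V :: "real \<Rightarrow> real" where "V t = Cf t + Ef t"
definition W :: "real \<Rightarrow> real" where
  "W t = (\<Sum>e\<in>E. L e * (\<bar>cur t e\<bar> - D t e)\<^sup>2 * (\<bar>cur t e\<bar> + D t e) / (D t e)\<^sup>2)"

lemma Cf_deriv: "t \<ge> 0 \<Longrightarrow> (Cf has_real_derivative (\<Sum>e\<in>E. L e * (\<bar>cur t e\<bar> - D t e))) (at t within {0..})"
  unfolding Cf_def[abs_def] by (intro DERIV_sum DERIV_cmult Dderiv)

lemma W_alg: fixes c d l :: real assumes "d > 0" shows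
  "l * (\<bar>c\<bar> - d) + l * c\<^sup>2 * (- ((\<bar>c\<bar> - d) * inverse (d ^ Suc (Suc 0)))) =
   - (l * (\<bar>c\<bar> - d)\<^sup>2 * (\<bar>c\<bar> + d) / d\<^sup>2)"
proof -
  have c: "c\<^sup>2 = \<bar>c\<bar>\<^sup>2" by (rule power2_abs[symmetric])
  show ?thesis unfolding c using assms by (simp add: field_simps power2_eq_square)
qed

lemma V_deriv: assumes "t \<ge> 0" shows "(V has_real_derivative - W t) (at t within {0..})"
proof -
  have "(V has_real_derivative (\<Sum>e\<in>E. L e * (\<bar>cur t e\<bar> - D t e)) + Ed t) (at t within {0..})"
    unfolding V_def[abs_def] by (intro DERIV_add Cf_deriv Ef_deriv assms)
  moreover have "(\<Sum>e\<in>E. L e * (\<bar>cur t e\<bar> - D t e)) + Ed t = - W t"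
    unfolding Ed_def W_def kd_def sum.distrib[symmetric] sum_negf[symmetric]
    by (intro sum.cong refl W_alg Dpos assms)
  ultimately show ?thesis by simp
qed

lemma W_term_nonneg: "t \<ge> 0 \<Longrightarrow> e \<in> E \<Longrightarrow> L e * (\<bar>cur t e\<bar> - D t e)\<^sup>2 * (\<bar>cur t e\<bar> + D t e) / (D t e)\<^sup>2 \<ge> 0"
  using Lpos Dpos[of t e] by (intro divide_nonneg_nonneg mult_nonneg_nonneg) auto

lemma W_nonneg: "t \<ge> 0 \<Longrightarrow> W t \<ge> 0"
  unfolding W_def by (intro sum_nonneg W_term_nonneg)

lemma W_cont: "continuous_on {0..} W"
  unfolding continuous_on_def W_def
  by (auto intro!: tendsto_intros cur_tends Dtends dest: Dpos)

lemma V_int: assumes "0 \<le> a" "a \<le> c" shows "(W has_integral V a - V c) {a..c}"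
proof -
  have "((\<lambda>x. - W x) has_integral V c - V a) {a..c}"
    using assms by (intro fundamental_theorem_of_calculus)
      (auto simp: has_real_derivative_iff_has_vector_derivative[symmetric]
        intro!: has_field_derivative_subset[OF V_deriv])
  from has_integral_neg[OF this] show ?thesis by simp
qed

lemma V_mono: "0 \<le> a \<Longrightarrow> a \<le> c \<Longrightarrow> V c \<le> V a"
  using has_integral_nonneg[OF V_int, of a c] W_nonneg by auto

end


context phys begin

lemma Cf_nonneg: "t \<ge> 0 \<Longrightarrow> Cf t \<ge> 0"
  unfolding Cf_def using Lpos Dpos[of t] by (intro sum_nonneg) (auto intro: less_imp_le)

lemma V_nonneg: "t \<ge> 0 \<Longrightarrow> V t \<ge> 0"
  unfolding V_def using Cf_nonneg Ef_nonneg by (simp add: add_nonneg_nonneg)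

lemma V_le0: "t \<ge> 0 \<Longrightarrow> V t \<le> V 0"
  using V_mono[of 0 t] by simp

lemma V0_nonneg: "V 0 \<ge> 0" using V_nonneg by simp

lemma D_bound: assumes "t \<ge> 0" "e \<in> E" shows "D t e \<le> V 0 / L e"
proof -
  have "L e * D t e \<le> Cf t" unfolding Cf_def
    by (rule member_le_sum[OF assms(2) _ finE]) (use Lpos Dpos[OF assms(1)] in \<open>auto intro: less_imp_le\<close>)
  also have "\<dots> \<le> V t" unfolding V_def using Ef_nonneg[OF assms(1)] by simp
  also have "\<dots> \<le> V 0" by (rule V_le0[OF assms(1)])
  finally show ?thesis using Lpos assms(2) by (simp add: field_simps)
qed

lemma Ef_le: "t \<ge> 0 \<Longrightarrow> Ef t \<le> V 0"
  using V_le0[of t] Cf_nonneg[of t] unfolding V_def by simp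

lemma cur_bound: assumes "t \<ge> 0" "e \<in> E" shows "\<bar>cur t e\<bar> \<le> V 0 / L e"
proof -
  have Le: "L e > 0" using Lpos assms by auto
  have "L e * (cur t e)\<^sup>2 \<le> D t e * Ef t" by (rule cur_sq_le[OF assms])
  also have "\<dots> \<le> (V 0 / L e) * V 0"
    using D_bound[OF assms] Ef_le[OF assms(1)] Ef_nonneg[OF assms(1)] Dpos[OF assms]
    by (intro mult_mono) auto
  finally have "(cur t e)\<^sup>2 \<le> (V 0 / L e)\<^sup>2" using Le by (simp add: field_simps power2_eq_square)
  then show ?thesis using V0_nonneg Le by (metis abs_le_square_iff abs_of_nonneg divide_nonneg_pos)
qed

definition Vinf :: real where "Vinf = Inf (V ` {0..})"

lemma Vinf_le: "t \<ge> 0 \<Longrightarrow> Vinf \<le> V t"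
  unfolding Vinf_def by (rule cInf_lower) (auto intro: bdd_belowI[of _ 0] V_nonneg)

lemma Vinf_nonneg: "Vinf \<ge> 0"
  unfolding Vinf_def by (rule cInf_greatest) (auto intro: V_nonneg)

lemma V_tends: "(V \<longlongrightarrow> Vinf) at_top"
proof (rule order_tendstoI)
  fix a assume "a < Vinf"
  then show "eventually (\<lambda>t. a < V t) at_top"
    unfolding eventually_at_top_linorder using Vinf_le by (intro exI[of _ 0]) force
next
  fix a assume a: "Vinf < a"
  then obtain t0 where t0: "t0 \<in> {0..}" "V t0 < a"
    unfolding Vinf_def by (subst (asm) cInf_less_iff) (auto intro: bdd_belowI[of _ 0] V_nonneg)
  then show "eventually (\<lambda>t. V t < a) at_top"
    unfolding eventually_at_top_linorder using V_mono[of t0]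
    by (intro exI[of _ t0]) (auto intro: le_less_trans)
qed

lemma W_small: assumes "0 \<le> a" "0 < d" shows "\<exists>s\<in>{a..a+d}. W s * d \<le> V a - V (a + d)"
proof -
  have "continuous_on {a..a+d} W" using assms by (intro continuous_on_subset[OF W_cont]) auto
  then obtain s where s: "s \<in> {a..a+d}" "\<forall>y\<in>{a..a+d}. W s \<le> W y"
    using continuous_attains_inf[of "{a..a+d}" W] assms by auto
  have "W s * d \<le> V a - V (a + d)"
    using has_integral_le[OF has_integral_const_real[of "W s" a "a+d"] V_int[of a "a+d"]] s assms
    by (auto simp: mult.commute)
  with s show ?thesis by blast
qed

lemma Dlip: assumes "0 \<le> a" "a \<le> c" "e \<in> E"
  shows "\<bar>D c e - D a e\<bar> \<le> (2 * V 0 / L e) * (c - a)"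
proof -
  define K where "K = 2 * V 0 / L e"
  have bd: "\<bar>\<bar>cur s e\<bar> - D s e\<bar> \<le> K" if "s \<ge> 0" for s
    using cur_bound[OF that assms(3)] D_bound[OF that assms(3)] Dpos[OF that assms(3)]
    unfolding K_def by auto
  have "K * a - D a e \<le> K * c - D c e"
  proof (rule mono_deriv[where f = "\<lambda>s. K * s - D s e"])
    fix s assume s: "s \<in> {a..c}"
    show "((\<lambda>s. K * s - D s e) has_real_derivative K * 1 - (\<bar>cur s e\<bar> - D s e)) (at s within {a..c})"
      by (intro DERIV_diff DERIV_cmult DERIV_ident Dderiv' s assms)
    show "0 \<le> K * 1 - (\<bar>cur s e\<bar> - D s e)" using bd[of s] s assms by auto
  qed (use assms in auto)
  moreover have "K * a + D a e \<le> K * c + D c e"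
  proof (rule mono_deriv[where f = "\<lambda>s. K * s + D s e"])
    fix s assume s: "s \<in> {a..c}"
    show "((\<lambda>s. K * s + D s e) has_real_derivative K * 1 + (\<bar>cur s e\<bar> - D s e)) (at s within {a..c})"
      by (intro DERIV_add DERIV_cmult DERIV_ident Dderiv' s assms)
    show "0 \<le> K * 1 + (\<bar>cur s e\<bar> - D s e)" using bd[of s] s assms by auto
  qed (use assms in auto)
  ultimately show ?thesis unfolding K_def[symmetric] by (auto simp: algebra_simps abs_le_iff)
qed

end


context phys begin

lemma W_term_le: "t \<ge> 0 \<Longrightarrow> e \<in> E \<Longrightarrow>
  L e * (\<bar>cur t e\<bar> - D t e)\<^sup>2 * (\<bar>cur t e\<bar> + D t e) / (D t e)\<^sup>2 \<le> W t"
  unfolding W_def by (rule member_le_sum[OF _ _ finE]) (auto intro: W_term_nonneg)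

lemma absdiff_bound: assumes t: "t \<ge> 0" and e: "e \<in> E"
  shows "(\<bar>cur t e\<bar> - D t e)\<^sup>2 \<le> V 0 * W t / (L e)\<^sup>2"
proof -
  have Le: "L e > 0" using Lpos e by auto
  have Dp: "D t e > 0" by (rule Dpos[OF t e])
  have "L e * (\<bar>cur t e\<bar> - D t e)\<^sup>2 / D t e \<le> L e * (\<bar>cur t e\<bar> - D t e)\<^sup>2 * (\<bar>cur t e\<bar> + D t e) / (D t e)\<^sup>2"
  proof -
    have ineq: "L e * (\<bar>cur t e\<bar> - D t e)\<^sup>2 * D t e \<le> L e * (\<bar>cur t e\<bar> - D t e)\<^sup>2 * (\<bar>cur t e\<bar> + D t e)"
      using Le by (intro mult_left_mono) auto
    have eq: "L e * (\<bar>cur t e\<bar> - D t e)\<^sup>2 / D t e = L e * (\<bar>cur t e\<bar> - D t e)\<^sup>2 * D t e / (D t e)\<^sup>2"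
      using Dp by (simp add: power2_eq_square)
    show ?thesis unfolding eq by (rule divide_right_mono[OF ineq]) simp
  qed
  also have "\<dots> \<le> W t" by (rule W_term_le[OF t e])
  finally have "(\<bar>cur t e\<bar> - D t e)\<^sup>2 \<le> D t e * W t / L e" using Le Dp by (simp add: field_simps)
  also have "\<dots> \<le> (V 0 / L e) * W t / L e"
    using D_bound[OF t e] W_nonneg[OF t] Le by (intro divide_right_mono mult_right_mono) auto
  finally show ?thesis by (simp add: power2_eq_square)
qed

lemma EC_term: assumes t: "t \<ge> 0" and e: "e \<in> E"
  shows "\<bar>L e * (cur t e)\<^sup>2 / D t e - L e * D t e\<bar> \<le> sqrt (2 * V 0 * W t)"
proof -
  have Le: "L e > 0" using Lpos e by auto
  have Dp: "D t e > 0" by (rule Dpos[OF t e])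
  define c where "c = \<bar>cur t e\<bar>"
  have c2: "(cur t e)\<^sup>2 = c\<^sup>2" unfolding c_def by simp
  have c0: "c \<ge> 0" unfolding c_def by simp
  have "(L e * (cur t e)\<^sup>2 / D t e - L e * D t e)\<^sup>2 =
      (L e * (c - D t e)\<^sup>2 * (c + D t e) / (D t e)\<^sup>2) * (L e * (c + D t e))"
    unfolding c2 using Dp by (simp add: field_simps power2_eq_square)
  also have "\<dots> \<le> W t * (2 * V 0)"
  proof (rule mult_mono)
    show "L e * (c - D t e)\<^sup>2 * (c + D t e) / (D t e)\<^sup>2 \<le> W t" unfolding c_def by (rule W_term_le[OF t e])
    have "c \<le> V 0 / L e" "D t e \<le> V 0 / L e" using cur_bound[OF t e] D_bound[OF t e] c_def by auto
    then have "c + D t e \<le> 2 * (V 0 / L e)" by simp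
    then show "L e * (c + D t e) \<le> 2 * V 0" using Le by (simp add: field_simps)
    show "0 \<le> W t" by (rule W_nonneg[OF t])
    show "0 \<le> L e * (c + D t e)" using Le Dp c0 by simp
  qed
  finally show ?thesis by (simp add: real_le_rsqrt mult.commute mult.left_commute)
qed

lemma EC_diff: assumes t: "t \<ge> 0" shows "\<bar>Ef t - Cf t\<bar> \<le> real (card E) * sqrt (2 * V 0 * W t)"
proof -
  have "\<bar>Ef t - Cf t\<bar> = \<bar>\<Sum>e\<in>E. L e * (cur t e)\<^sup>2 / D t e - L e * D t e\<bar>"
    unfolding Ef_def Cf_def by (simp add: sum_subtractf)
  also have "\<dots> \<le> (\<Sum>e\<in>E. \<bar>L e * (cur t e)\<^sup>2 / D t e - L e * D t e\<bar>)" by (rule sum_abs)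
  also have "\<dots> \<le> (\<Sum>e\<in>E. sqrt (2 * V 0 * W t))" by (intro sum_mono EC_term t)
  finally show ?thesis by simp
qed

lemma om1: assumes tn0: "\<forall>n. tn n \<ge> 0" and tn: "filterlim tn at_top sequentially"
  shows "\<exists>sn. (\<forall>n. sn n \<ge> 0) \<and> filterlim sn at_top sequentially \<and> (\<lambda>n. W (sn n)) \<longlonglongrightarrow> 0 \<and>
     (\<forall>e\<in>E. (\<lambda>n. D (sn n) e - D (tn n) e) \<longlonglongrightarrow> 0)"
proof -
  define x where "x n = V (tn n) - Vinf" for n
  have x0: "x n \<ge> 0" for n unfolding x_def using Vinf_le tn0 by auto
  have "(\<lambda>n. V (tn n)) \<longlonglongrightarrow> Vinf" by (rule filterlim_compose[OF V_tends tn])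
  from tendsto_diff[OF this tendsto_const[of Vinf]] have xt: "x \<longlonglongrightarrow> 0" unfolding x_def by simp
  define d where "d n = sqrt (x n) + inverse (real (Suc n))" for n
  have d0: "d n > 0" for n unfolding d_def using x0 by (simp add: add_nonneg_pos)
  have dt: "d \<longlonglongrightarrow> 0" unfolding d_def
    using tendsto_add[OF tendsto_real_sqrt[OF xt] LIMSEQ_inverse_real_of_nat] by simp
  have "\<forall>n. \<exists>s\<in>{tn n..tn n + d n}. W s * d n \<le> V (tn n) - V (tn n + d n)"
    using W_small tn0 d0 by blast
  then obtain sn where sn: "\<And>n. sn n \<in> {tn n..tn n + d n}" "\<And>n. W (sn n) * d n \<le> V (tn n) - V (tn n + d n)"
    by metis
  have sn0: "sn n \<ge> 0" for n using sn(1)[of n] tn0[rule_format, of n] by auto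
  have Wb: "W (sn n) \<le> sqrt (x n)" for n
  proof -
    have "V (tn n + d n) \<ge> Vinf" using Vinf_le tn0 d0[of n] by (simp add: add_nonneg_nonneg less_imp_le)
    then have "W (sn n) * d n \<le> x n" using sn(2)[of n] unfolding x_def by linarith
    also have "\<dots> = sqrt (x n) * sqrt (x n)" using x0[of n] by simp
    also have "\<dots> \<le> sqrt (x n) * d n" unfolding d_def using x0[of n] by (intro mult_left_mono) auto
    finally show ?thesis using d0[of n] by simp
  qed
  have Wt: "(\<lambda>n. W (sn n)) \<longlonglongrightarrow> 0"
    by (rule tendsto_sandwich[of "\<lambda>_. 0" _ _ "\<lambda>n. sqrt (x n)"])
      (use W_nonneg sn0 Wb tendsto_real_sqrt[OF xt] in auto)
  have snt: "filterlim sn at_top sequentially"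
    by (rule filterlim_at_top_mono[OF tn]) (use sn(1) in auto)
  have "(\<lambda>n. D (sn n) e - D (tn n) e) \<longlonglongrightarrow> 0" if e: "e \<in> E" for e
  proof (rule Lim_null_comparison)
    show "eventually (\<lambda>n. norm (D (sn n) e - D (tn n) e) \<le> (2 * V 0 / L e) * d n) sequentially"
    proof (rule always_eventually, rule allI)
      fix n
      have "\<bar>D (sn n) e - D (tn n) e\<bar> \<le> (2 * V 0 / L e) * (sn n - tn n)"
        using Dlip[OF tn0[rule_format, of n] _ e, of "sn n"] sn(1)[of n] by auto
      also have "\<dots> \<le> (2 * V 0 / L e) * d n"
        using sn(1)[of n] V0_nonneg Lpos e by (intro mult_left_mono) auto
      finally show "norm (D (sn n) e - D (tn n) e) \<le> (2 * V 0 / L e) * d n" by simp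
    qed
    show "(\<lambda>n. (2 * V 0 / L e) * d n) \<longlonglongrightarrow> 0" using tendsto_mult[OF tendsto_const[of "2 * V 0 / L e"] dt] by simp
  qed
  with sn0 snt Wt show ?thesis by blast
qed

end


context phys begin

lemma om2:
  assumes tn0: "\<forall>n. tn n \<ge> 0" and tn: "filterlim tn at_top sequentially"
    and Dl: "\<forall>e\<in>E. (\<lambda>n. D (tn n) e) \<longlonglongrightarrow> Db e"
  shows "equilibrium N E src tgt b L Db \<and> equilibrium_cost E L Db = Vinf / 2"
proof -
  obtain sn where sn0: "\<forall>n. sn n \<ge> 0" and snt: "filterlim sn at_top sequentially"
    and Wt: "(\<lambda>n. W (sn n)) \<longlonglongrightarrow> 0" and dd: "\<forall>e\<in>E. (\<lambda>n. D (sn n) e - D (tn n) e) \<longlonglongrightarrow> 0"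
    using om1[OF tn0 tn] by blast
  have Ds: "(\<lambda>n. D (sn n) e) \<longlonglongrightarrow> Db e" if "e \<in> E" for e
    using tendsto_add[OF Dl[rule_format, OF that] dd[rule_format, OF that]] by simp
  have Db0: "Db e \<ge> 0" if "e \<in> E" for e
    by (rule tendsto_lowerbound[OF Ds[OF that]])
      (use Dpos sn0 that in \<open>auto intro!: always_eventually less_imp_le\<close>)
  define Ep where "Ep = {e\<in>E. Db e > 0}"
  have finEp: "finite Ep" unfolding Ep_def using finE by simp
  define R where "R = {(src e, tgt e) | e. e \<in> Ep} \<union> {(tgt e, src e) | e. e \<in> Ep}"
  define rep where "rep v = (SOME u. (u, v) \<in> R\<^sup>*)" for v
  have rep_eq: "rep (src e) = rep (tgt e)" if "e \<in> Ep" for e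
  proof -
    have "(src e, tgt e) \<in> R" "(tgt e, src e) \<in> R" using that unfolding R_def by blast+
    then have "(\<lambda>u. (u, src e) \<in> R\<^sup>*) = (\<lambda>u. (u, tgt e) \<in> R\<^sup>*)"
      by (auto intro!: ext intro: rtrancl_into_rtrancl)
    then show ?thesis unfolding rep_def by simp
  qed
  have rep_in: "(rep v, v) \<in> R\<^sup>*" for v
    unfolding rep_def by (rule someI[where P = "\<lambda>u. (u, v) \<in> R\<^sup>*" and x = v]) simp
  define kk where "kk v = (SOME k. (rep v, v) \<in> R ^^ k)" for v
  have kk: "(rep v, v) \<in> R ^^ kk v" for v
  proof -
    obtain k where "(rep v, v) \<in> R ^^ k" using rep_in[of v] rtrancl_power by blast
    then show ?thesis unfolding kk_def by (rule someI[where P = "\<lambda>k. (rep v, v) \<in> R ^^ k"])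
  qed
  define Bg where "Bg = (\<Sum>e\<in>Ep. 2 * V 0 / Db e)"
  have Bg0: "Bg \<ge> 0" unfolding Bg_def Ep_def using V0_nonneg by (intro sum_nonneg) auto
  have evD: "eventually (\<lambda>n. \<forall>e\<in>Ep. D (sn n) e > Db e / 2) sequentially"
  proof (rule eventually_ball_finite[OF finEp], rule ballI)
    fix e assume "e \<in> Ep"
    then have "e \<in> E" "Db e / 2 < Db e" unfolding Ep_def by auto
    from order_tendstoD(1)[OF Ds[OF this(1)] this(2)]
    show "eventually (\<lambda>n. D (sn n) e > Db e / 2) sequentially" .
  qed
  have grad_bd: "\<bar>pot (sn n) (src e) - pot (sn n) (tgt e)\<bar> \<le> Bg"
    if n: "\<forall>e\<in>Ep. D (sn n) e > Db e / 2" and e: "e \<in> Ep" for n e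
  proof -
    have eE: "e \<in> E" and Dbp: "Db e > 0" using e unfolding Ep_def by auto
    have Le: "L e > 0" using Lpos eE by auto
    have Dp: "D (sn n) e > 0" using Dpos sn0 eE by auto
    have "\<bar>pot (sn n) (src e) - pot (sn n) (tgt e)\<bar> = L e * \<bar>cur (sn n) e\<bar> / D (sn n) e"
      unfolding grad[OF sn0[rule_format] eE] using Le Dp by (simp add: abs_mult)
    also have "\<dots> \<le> L e * (V 0 / L e) / D (sn n) e"
      using cur_bound[OF sn0[rule_format] eE] Le Dp by (intro divide_right_mono mult_left_mono) auto
    also have "\<dots> = V 0 / D (sn n) e" using Le by simp
    also have "\<dots> \<le> V 0 / (Db e / 2)"
      using n e Dbp V0_nonneg by (intro divide_left_mono) auto
    also have "\<dots> = 2 * V 0 / Db e" by simp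
    also have "\<dots> \<le> Bg" unfolding Bg_def
      by (rule member_le_sum[OF e _ finEp]) (use V0_nonneg in \<open>auto simp: Ep_def\<close>)
    finally show ?thesis .
  qed
  have pbd: "\<bar>pot (sn n) v - pot (sn n) (rep v)\<bar> \<le> real (kk v) * Bg"
    if n: "\<forall>e\<in>Ep. D (sn n) e > Db e / 2" for n v
  proof -
    have "\<forall>(x,y)\<in>R. \<bar>pot (sn n) x - pot (sn n) y\<bar> \<le> Bg"
      using grad_bd[OF n] unfolding R_def by (auto simp: abs_minus_commute)
    from path_bound[OF kk this] show ?thesis by (simp add: abs_minus_commute)
  qed
  define f where "f n z = (case z of Inl e \<Rightarrow> cur (sn n) e | Inr v \<Rightarrow> pot (sn n) v - pot (sn n) (rep v))" for n z
  define A where "A = Inl ` E \<union> Inr ` N"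
  define B where "B = (\<Sum>e\<in>E. V 0 / L e) + (\<Sum>v\<in>N. real (kk v)) * Bg"
  have "eventually (\<lambda>n. \<forall>z\<in>A. \<bar>f n z\<bar> \<le> B) sequentially"
    using evD
  proof eventually_elim
    case (elim n)
    have s1: "(\<Sum>e\<in>E. V 0 / L e) \<ge> 0" using V0_nonneg Lpos by (intro sum_nonneg) auto
    have s2: "(\<Sum>v\<in>N. real (kk v)) * Bg \<ge> 0" using Bg0 by (intro mult_nonneg_nonneg sum_nonneg) auto
    show ?case
    proof
      fix z assume "z \<in> A"
      then consider (l) e where "z = Inl e" "e \<in> E" | (r) v where "z = Inr v" "v \<in> N"
        unfolding A_def by auto
      then show "\<bar>f n z\<bar> \<le> B"
      proof cases
        case l
        have "\<bar>f n z\<bar> \<le> V 0 / L e" unfolding f_def l using cur_bound[OF sn0[rule_format] l(2)] by simp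
        also have "\<dots> \<le> (\<Sum>e\<in>E. V 0 / L e)"
          by (rule member_le_sum[OF l(2) _ finE]) (use V0_nonneg Lpos in auto)
        finally show ?thesis unfolding B_def using s2 by linarith
      next
        case r
        have "\<bar>f n z\<bar> \<le> real (kk v) * Bg" unfolding f_def r using pbd[OF elim] by simp
        also have "\<dots> \<le> (\<Sum>v\<in>N. real (kk v)) * Bg"
          using Bg0 by (intro mult_right_mono member_le_sum r(2) finN) auto
        finally show ?thesis unfolding B_def using s1 by linarith
      qed
    qed
  qed
  moreover have "finite A" unfolding A_def using finE finN by simp
  ultimately obtain r g where r: "strict_mono r" "\<forall>z\<in>A. (\<lambda>n. f (r n) z) \<longlonglongrightarrow> g z"
    using bw_finite_ev by blast
  define Qb where "Qb e = g (Inl e)" for e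
  define pb where "pb v = g (Inr v)" for v
  have Qt: "(\<lambda>n. cur (sn (r n)) e) \<longlonglongrightarrow> Qb e" if "e \<in> E" for e
    using r(2)[rule_format, of "Inl e"] that unfolding A_def f_def Qb_def by simp
  have pt: "(\<lambda>n. pot (sn (r n)) v - pot (sn (r n)) (rep v)) \<longlonglongrightarrow> pb v" if "v \<in> N" for v
    using r(2)[rule_format, of "Inr v"] that unfolding A_def f_def pb_def by simp
  have Dr: "(\<lambda>n. D (sn (r n)) e) \<longlonglongrightarrow> Db e" if "e \<in> E" for e
    using LIMSEQ_subseq_LIMSEQ[OF Ds[OF that] r(1)] by (simp add: o_def)
  have Wr: "(\<lambda>n. W (sn (r n))) \<longlonglongrightarrow> 0"
    using LIMSEQ_subseq_LIMSEQ[OF Wt r(1)] by (simp add: o_def)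
  have absQ: "\<bar>Qb e\<bar> = Db e" if e: "e \<in> E" for e
  proof -
    have "(\<lambda>n. \<bar>cur (sn (r n)) e\<bar> - D (sn (r n)) e) \<longlonglongrightarrow> 0"
    proof (rule Lim_null_comparison)
      show "eventually (\<lambda>n. norm (\<bar>cur (sn (r n)) e\<bar> - D (sn (r n)) e) \<le> sqrt (V 0 * W (sn (r n)) / (L e)\<^sup>2)) sequentially"
      proof (rule always_eventually, rule allI)
        fix n
        show "norm (\<bar>cur (sn (r n)) e\<bar> - D (sn (r n)) e) \<le> sqrt (V 0 * W (sn (r n)) / (L e)\<^sup>2)"
          using absdiff_bound[OF sn0[rule_format] e, of "r n"] by (simp add: real_le_rsqrt)
      qed
      have Lne: "(L e)\<^sup>2 \<noteq> 0" using Lpos e by auto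
      show "(\<lambda>n. sqrt (V 0 * W (sn (r n)) / (L e)\<^sup>2)) \<longlonglongrightarrow> 0"
        using tendsto_real_sqrt[OF tendsto_divide[OF tendsto_mult[OF tendsto_const[of "V 0"] Wr] tendsto_const[of "(L e)\<^sup>2"] Lne]]
        by simp
    qed
    moreover have "(\<lambda>n. \<bar>cur (sn (r n)) e\<bar> - D (sn (r n)) e) \<longlonglongrightarrow> \<bar>Qb e\<bar> - Db e"
      by (intro tendsto_intros Qt Dr e)
    ultimately show ?thesis using LIMSEQ_unique by fastforce
  qed
  have feasQ: "feasible_flow N E src tgt b Qb"
    unfolding feasible_flow_def
  proof
    fix v assume v: "v \<in> N"
    have "(\<lambda>n. net_outflow E src tgt (cur (sn (r n))) v) \<longlonglongrightarrow> net_outflow E src tgt Qb v"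
      unfolding net_outflow_def by (rule tendsto_diff; rule tendsto_sum; rule Qt; simp)
    moreover have "(\<lambda>n. net_outflow E src tgt (cur (sn (r n))) v) = (\<lambda>n. b v)"
    proof (rule ext)
      fix n show "net_outflow E src tgt (cur (sn (r n))) v = b v"
        using feas[OF sn0[rule_format, of "r n"]] v unfolding feasible_flow_def by blast
    qed
    ultimately show "net_outflow E src tgt Qb v = b v" by (simp add: LIMSEQ_const_iff)
  qed
  have ohm: "Qb e = Db e * (pb (src e) - pb (tgt e)) / L e" if e: "e \<in> E" for e
  proof (cases "e \<in> Ep")
    case True
    then have Dbp: "Db e > 0" unfolding Ep_def by auto
    have Le: "L e > 0" using Lpos e by auto
    have sN: "src e \<in> N" "tgt e \<in> N" using endp e by auto
    have "(\<lambda>n. (pot (sn (r n)) (src e) - pot (sn (r n)) (rep (src e))) - (pot (sn (r n)) (tgt e) - pot (sn (r n)) (rep (tgt e))))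
        \<longlonglongrightarrow> pb (src e) - pb (tgt e)"
      by (intro tendsto_diff pt sN)
    moreover have "(\<lambda>n. (pot (sn (r n)) (src e) - pot (sn (r n)) (rep (src e))) - (pot (sn (r n)) (tgt e) - pot (sn (r n)) (rep (tgt e))))
        = (\<lambda>n. L e * cur (sn (r n)) e / D (sn (r n)) e)"
    proof (rule ext)
      fix n
      show "(pot (sn (r n)) (src e) - pot (sn (r n)) (rep (src e))) - (pot (sn (r n)) (tgt e) - pot (sn (r n)) (rep (tgt e)))
        = L e * cur (sn (r n)) e / D (sn (r n)) e"
        using rep_eq[OF True] grad[OF sn0[rule_format, of "r n"] e] by simp
    qed
    moreover have "(\<lambda>n. L e * cur (sn (r n)) e / D (sn (r n)) e) \<longlonglongrightarrow> L e * Qb e / Db e"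
      using Dbp by (intro tendsto_intros Qt Dr e) auto
    ultimately have "pb (src e) - pb (tgt e) = L e * Qb e / Db e" using LIMSEQ_unique by fastforce
    then show ?thesis using Dbp Le by simp
  next
    case False
    then have "Db e = 0" using Db0[OF e] e unfolding Ep_def by auto
    with absQ[OF e] show ?thesis by simp
  qed
  have eq: "equilibrium N E src tgt b L Db"
    unfolding equilibrium_def is_current_def
  proof (intro conjI ballI exI[of _ Qb] exI[of _ pb])
    show "\<And>e. e \<in> E \<Longrightarrow> 0 \<le> Db e" by (rule Db0)
    show "feasible_flow N E src tgt b Qb" by (rule feasQ)
    show "\<And>e. e \<in> E \<Longrightarrow> Qb e = Db e * (pb (src e) - pb (tgt e)) / L e" by (rule ohm)
    show "\<And>e. e \<in> E \<Longrightarrow> Db e = \<bar>Qb e\<bar>" using absQ by simp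
  qed
  have Cr: "(\<lambda>n. Cf (sn (r n))) \<longlonglongrightarrow> equilibrium_cost E L Db"
    unfolding Cf_def equilibrium_cost_def by (intro tendsto_intros Dr)
  have ECr: "(\<lambda>n. Ef (sn (r n)) - Cf (sn (r n))) \<longlonglongrightarrow> 0"
  proof (rule Lim_null_comparison)
    show "eventually (\<lambda>n. norm (Ef (sn (r n)) - Cf (sn (r n))) \<le> real (card E) * sqrt (2 * V 0 * W (sn (r n)))) sequentially"
      using EC_diff sn0 by (intro always_eventually) auto
    show "(\<lambda>n. real (card E) * sqrt (2 * V 0 * W (sn (r n)))) \<longlonglongrightarrow> 0"
      using tendsto_mult[OF tendsto_const[of "real (card E)"] tendsto_real_sqrt[OF tendsto_mult[OF tendsto_const[of "2 * V 0"] Wr]]]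
      by simp
  qed
  have "filterlim (\<lambda>n. sn (r n)) at_top sequentially"
    using filterlim_compose[OF snt filterlim_subseq[OF r(1)]] .
  then have Vr: "(\<lambda>n. V (sn (r n))) \<longlonglongrightarrow> Vinf" by (rule filterlim_compose[OF V_tends])
  have "(\<lambda>n. 2 * Cf (sn (r n)) + (Ef (sn (r n)) - Cf (sn (r n)))) \<longlonglongrightarrow> 2 * equilibrium_cost E L Db + 0"
    by (intro tendsto_intros Cr ECr)
  moreover have "(\<lambda>n. 2 * Cf (sn (r n)) + (Ef (sn (r n)) - Cf (sn (r n)))) = (\<lambda>n. V (sn (r n)))"
    unfolding V_def by auto
  ultimately have "Vinf = 2 * equilibrium_cost E L Db" using Vr LIMSEQ_unique by fastforce
  with eq show ?thesis by simp
qed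

end


context phys begin

lemma lnD_deriv: "t \<in> {a..c} \<Longrightarrow> a \<ge> 0 \<Longrightarrow> e \<in> E \<Longrightarrow>
   ((\<lambda>s. ln (D s e)) has_real_derivative (1 / D t e) * (\<bar>cur t e\<bar> - D t e)) (at t within {a..c})"
  by (rule DERIV_chain2[OF DERIV_ln_divide Dderiv']) (auto intro: Dpos)

lemma Ef_le_flow: assumes t: "t \<ge> 0" and F: "feasible_flow N E src tgt b F"
  shows "Ef t \<le> (\<Sum>e\<in>E. \<bar>F e\<bar> * (L e * \<bar>cur t e\<bar> / D t e))"
proof -
  let ?g = "\<lambda>e. pot t (src e) - pot t (tgt e)"
  have o: "(\<Sum>e\<in>E. (F e - cur t e) * ?g e) = 0" by (rule orth[OF finE finN endp F feas[OF t]])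
  have "Ef t = (\<Sum>e\<in>E. cur t e * ?g e)"
    unfolding Ef_def by (intro sum.cong refl) (simp add: grad[OF t] power2_eq_square)
  also have "\<dots> = (\<Sum>e\<in>E. F e * ?g e)"
    using o by (simp add: left_diff_distrib sum_subtractf)
  also have "\<dots> \<le> (\<Sum>e\<in>E. \<bar>F e\<bar> * (L e * \<bar>cur t e\<bar> / D t e))"
  proof (rule sum_mono)
    fix e assume e: "e \<in> E"
    have "F e * ?g e \<le> \<bar>F e * ?g e\<bar>" by simp
    also have "\<dots> = \<bar>F e\<bar> * (L e * \<bar>cur t e\<bar> / D t e)"
      unfolding grad[OF t e] using Lpos e Dpos[OF t e] by (simp add: abs_mult abs_of_pos)
    finally show "F e * ?g e \<le> \<bar>F e\<bar> * (L e * \<bar>cur t e\<bar> / D t e)" .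
  qed
  finally show ?thesis .
qed

lemma optimal:
  assumes lim: "\<forall>e\<in>E. ((\<lambda>t. D t e) \<longlongrightarrow> Ds e) at_top" and cost: "equilibrium_cost E L Ds = Vinf / 2"
    and F: "feasible_flow N E src tgt b F"
  shows "equilibrium_cost E L Ds \<le> flow_cost E L F"
proof (rule ccontr)
  define c where "c = equilibrium_cost E L Ds"
  define phi where "phi = flow_cost E L F"
  assume "\<not> equilibrium_cost E L Ds \<le> flow_cost E L F"
  then have cphi: "phi < c" unfolding c_def phi_def by simp
  define m where "m = (c + phi) / 2"
  have Cc: "(Cf \<longlongrightarrow> c) at_top" unfolding Cf_def[abs_def] c_def equilibrium_cost_def
    by (intro tendsto_intros lim[rule_format])
  have "((\<lambda>t. V t - Cf t) \<longlongrightarrow> Vinf - c) at_top"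
    by (intro tendsto_diff V_tends Cc)
  moreover have "Vinf - c = c" using cost unfolding c_def by simp
  moreover have "(\<lambda>t. V t - Cf t) = Ef" unfolding V_def by auto
  ultimately have Et: "(Ef \<longlongrightarrow> c) at_top" by simp
  have "m < c" using cphi unfolding m_def by simp
  from order_tendstoD(1)[OF Et this] obtain t1 where t1: "\<And>t. t \<ge> t1 \<Longrightarrow> m < Ef t"
    unfolding eventually_at_top_linorder by auto
  define t0 where "t0 = max t1 0"
  have t0: "t0 \<ge> 0" "\<And>t. t \<ge> t0 \<Longrightarrow> m < Ef t" using t1 unfolding t0_def by auto
  define g where "g = m - phi"
  have g: "g > 0" using cphi unfolding g_def m_def by simp
  define Phi where "Phi t = (\<Sum>e\<in>E. L e * \<bar>F e\<bar> * ln (D t e))" for t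
  have grow: "Phi t0 + g * (t - t0) \<le> Phi t" if "t \<ge> t0" for t
  proof -
    have "Phi t0 - g * t0 \<le> Phi t - g * t"
    proof (rule mono_deriv[where f = "\<lambda>s. Phi s - g * s"])
      fix s assume s: "s \<in> {t0..t}"
      then have s0: "s \<ge> 0" using t0 by auto
      show "((\<lambda>s. Phi s - g * s) has_real_derivative
          (\<Sum>e\<in>E. L e * \<bar>F e\<bar> * ((1 / D s e) * (\<bar>cur s e\<bar> - D s e))) - g * 1) (at s within {t0..t})"
        unfolding Phi_def
        by (intro DERIV_diff DERIV_sum DERIV_cmult DERIV_ident lnD_deriv s t0(1))
      have "(\<Sum>e\<in>E. L e * \<bar>F e\<bar> * ((1 / D s e) * (\<bar>cur s e\<bar> - D s e)))
          = (\<Sum>e\<in>E. \<bar>F e\<bar> * (L e * \<bar>cur s e\<bar> / D s e)) - phi"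
        unfolding phi_def flow_cost_def sum_subtractf[symmetric]
      proof (intro sum.cong refl)
        fix e assume e: "e \<in> E"
        show "L e * \<bar>F e\<bar> * ((1 / D s e) * (\<bar>cur s e\<bar> - D s e)) = \<bar>F e\<bar> * (L e * \<bar>cur s e\<bar> / D s e) - L e * \<bar>F e\<bar>"
          using Dpos[OF s0 e] by (simp add: field_simps)
      qed
      also have "\<dots> \<ge> Ef s - phi" using Ef_le_flow[OF s0 F] by simp
      finally have "(\<Sum>e\<in>E. L e * \<bar>F e\<bar> * ((1 / D s e) * (\<bar>cur s e\<bar> - D s e))) \<ge> Ef s - phi" .
      moreover have "Ef s > m" using t0(2) s by auto
      ultimately show "0 \<le> (\<Sum>e\<in>E. L e * \<bar>F e\<bar> * ((1 / D s e) * (\<bar>cur s e\<bar> - D s e))) - g * 1"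
        unfolding g_def by simp
    qed (use that in auto)
    then show ?thesis by (simp add: algebra_simps)
  qed
  define Pm where "Pm = (\<Sum>e\<in>E. L e * \<bar>F e\<bar> * ln (V 0 / L e))"
  have bnd: "Phi t \<le> Pm" if "t \<ge> 0" for t
    unfolding Phi_def Pm_def
  proof (rule sum_mono)
    fix e assume e: "e \<in> E"
    have "ln (D t e) \<le> ln (V 0 / L e)"
      using Dpos[OF that e] D_bound[OF that e] by simp
    then show "L e * \<bar>F e\<bar> * ln (D t e) \<le> L e * \<bar>F e\<bar> * ln (V 0 / L e)"
      using Lpos e by (intro mult_left_mono) auto
  qed
  define t where "t = t0 + \<bar>Pm - Phi t0\<bar> / g + 1"
  have tt: "t \<ge> t0" unfolding t_def using g by simp
  have "Phi t0 + g * (t - t0) = Phi t0 + \<bar>Pm - Phi t0\<bar> + g"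
    unfolding t_def using g by (simp add: field_simps)
  also have "\<dots> > Pm" using g by linarith
  finally have "Phi t > Pm" using grow[OF tt] by linarith
  with bnd[of t] tt t0 show False by auto
qed

lemma conv:
  assumes H: "\<forall>D1 D2. equilibrium N E src tgt b L D1 \<and> equilibrium N E src tgt b L D2 \<and>
            (\<exists>e\<in>E. D1 e \<noteq> D2 e) \<longrightarrow> equilibrium_cost E L D1 \<noteq> equilibrium_cost E L D2"
  shows "\<exists>Ds. equilibrium N E src tgt b L Ds \<and> (\<forall>e\<in>E. ((\<lambda>t. D t e) \<longlongrightarrow> Ds e) at_top) \<and>
     equilibrium_cost E L Ds = Vinf / 2"
proof -
  define B where "B = (\<Sum>e\<in>E. V 0 / L e)"
  have Dbd: "\<bar>D t e\<bar> \<le> B" if "t \<ge> 0" "e \<in> E" for t e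
  proof -
    have "\<bar>D t e\<bar> \<le> V 0 / L e" using Dpos[OF that] D_bound[OF that] by simp
    also have "\<dots> \<le> B" unfolding B_def
      by (rule member_le_sum[OF that(2) _ finE]) (use V0_nonneg Lpos in auto)
    finally show ?thesis .
  qed
  have sub: "\<exists>D2. equilibrium N E src tgt b L D2 \<and> equilibrium_cost E L D2 = Vinf / 2 \<and>
       (\<exists>r. strict_mono r \<and> (\<forall>e\<in>E. (\<lambda>n. D (tn (r n)) e) \<longlonglongrightarrow> D2 e))"
    if tn0: "\<forall>n. tn n \<ge> 0" and tn: "filterlim tn at_top sequentially" for tn
  proof -
    obtain r D2 where r: "strict_mono r" "\<forall>e\<in>E. (\<lambda>n. D (tn (r n)) e) \<longlonglongrightarrow> D2 e"
      using bw_finite[OF finE, of "\<lambda>n e. D (tn n) e" B] Dbd tn0 by blast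
    have "filterlim (\<lambda>n. tn (r n)) at_top sequentially"
      using filterlim_compose[OF tn filterlim_subseq[OF r(1)]] .
    from om2[OF _ this r(2)] tn0 r show ?thesis by blast
  qed
  obtain Ds r where Ds: "equilibrium N E src tgt b L Ds" "equilibrium_cost E L Ds = Vinf / 2"
    using sub[of real] filterlim_real_sequentially by auto
  have "((\<lambda>t. D t e) \<longlongrightarrow> Ds e) at_top" if e: "e \<in> E" for e
  proof (rule ccontr)
    assume "\<not> ((\<lambda>t. D t e) \<longlongrightarrow> Ds e) at_top"
    then obtain eps where eps: "eps > 0" "\<not> eventually (\<lambda>t. dist (D t e) (Ds e) < eps) at_top"
      unfolding tendsto_iff by auto
    then have "\<forall>n. \<exists>t. t \<ge> real n \<and> \<not> dist (D t e) (Ds e) < eps"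
      unfolding eventually_at_top_linorder by blast
    then obtain tn where tn: "\<And>n. tn n \<ge> real n" "\<And>n. \<not> dist (D (tn n) e) (Ds e) < eps" by metis
    have tn0: "\<forall>n. tn n \<ge> 0" using tn(1) of_nat_0_le_iff order_trans by blast
    have tnt: "filterlim tn at_top sequentially"
      by (rule filterlim_at_top_mono[OF filterlim_real_sequentially]) (use tn(1) in auto)
    obtain D2 r where D2: "equilibrium N E src tgt b L D2" "equilibrium_cost E L D2 = Vinf / 2"
      "strict_mono r" "\<forall>e\<in>E. (\<lambda>n. D (tn (r n)) e) \<longlonglongrightarrow> D2 e"
      using sub[OF tn0 tnt] by blast
    have "\<forall>e\<in>E. Ds e = D2 e" using H Ds D2 by metis
    then have "(\<lambda>n. D (tn (r n)) e) \<longlonglongrightarrow> Ds e" using D2(4) e by auto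
    then have "(\<lambda>n. dist (D (tn (r n)) e) (Ds e)) \<longlonglongrightarrow> dist (Ds e) (Ds e)"
      by (intro tendsto_intros)
    moreover have "eventually (\<lambda>n. eps \<le> dist (D (tn (r n)) e) (Ds e)) sequentially"
      using tn(2) by (intro always_eventually) (auto simp: not_less)
    ultimately have "eps \<le> dist (Ds e) (Ds e)"
      by (rule tendsto_lowerbound) simp
    then have "eps \<le> 0" by simp
    with eps show False by simp
  qed
  with Ds show ?thesis by blast
qed

end


theorem mainTheorem18:
  fixes N :: "'v set" and E :: "'e set" and src tgt :: "'e \<Rightarrow> 'v"
    and L :: "'e \<Rightarrow> real" and b :: "'v \<Rightarrow> real" and D :: "real \<Rightarrow> 'e \<Rightarrow> real"
  assumes "finite N" and "finite E"
    and "\<forall>e\<in>E. src e \<in> N \<and> tgt e \<in> N"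
    and "graph_connected N E src tgt"
    and "\<forall>e\<in>E. L e > 0"
    and "(\<Sum>v\<in>N. b v) = 0"
    and "physarum_solution N E src tgt b L D"
    and "\<forall>D1 D2. equilibrium N E src tgt b L D1 \<and> equilibrium N E src tgt b L D2 \<and>
            (\<exists>e\<in>E. D1 e \<noteq> D2 e) \<longrightarrow> equilibrium_cost E L D1 \<noteq> equilibrium_cost E L D2"
  shows "\<exists>Dstar. equilibrium N E src tgt b L Dstar \<and>
           (\<forall>e\<in>E. ((\<lambda>t. D t e) \<longlongrightarrow> Dstar e) at_top) \<and>
           (\<exists>Fstar. feasible_flow N E src tgt b Fstar \<and>
              (\<forall>F. feasible_flow N E src tgt b F \<longrightarrow> flow_cost E L Fstar \<le> flow_cost E L F) \<and>
              (\<forall>e\<in>E. Dstar e = \<bar>Fstar e\<bar>))"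
proof -
  interpret phys N E src tgt L b D
    using assms(1,2,3,5,7) by unfold_locales auto
  obtain Ds where Ds: "equilibrium N E src tgt b L Ds" "\<forall>e\<in>E. ((\<lambda>t. D t e) \<longlongrightarrow> Ds e) at_top"
      "equilibrium_cost E L Ds = Vinf / 2"
    using conv[OF assms(8)] by blast
  from Ds(1) obtain Q where Q: "is_current N E src tgt b L Ds Q" "\<forall>e\<in>E. Ds e = \<bar>Q e\<bar>"
    unfolding equilibrium_def by blast
  have fQ: "feasible_flow N E src tgt b Q" using Q(1) unfolding is_current_def by auto
  have cQ: "flow_cost E L Q = equilibrium_cost E L Ds"
    unfolding flow_cost_def equilibrium_cost_def using Q(2) by simp
  show ?thesis
  proof (intro exI conjI allI impI)
    show "equilibrium N E src tgt b L Ds" by (rule Ds(1))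
    show "\<forall>e\<in>E. ((\<lambda>t. D t e) \<longlongrightarrow> Ds e) at_top" by (rule Ds(2))
    show "feasible_flow N E src tgt b Q" by (rule fQ)
    show "\<forall>e\<in>E. Ds e = \<bar>Q e\<bar>" by (rule Q(2))
    fix F assume "feasible_flow N E src tgt b F"
    then show "flow_cost E L Q \<le> flow_cost E L F" unfolding cQ by (rule optimal[OF Ds(2) Ds(3)])
  qed
qed

end
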